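(* Let $k\in\{0,1,-1\}$ and let $a_1,a_2$ be real constants. Consider the system of ordinary differential equations for real functions $\hat H(t)=(H_1,H_2,H_3)^T$, $\hat h(t)=(h_1,h_2,h_3)^T$: $$\frac{d\hat H}{dt}=\hat H\times\hat\Omega+\hat h\times\hat a,\qquad \frac{d\hat h}{dt}=\hat h\times\hat\Omega+k\,(\hat H\times\hat a),$$ where $\times$ is the vector product in $\mathbb{R}^3$, $\hat a=(a_1,a_2,0)^T$ and $\hat\Omega=(H_1/2,\,H_2/2,\,H_3)^T$ (i.e. $c_1=c_2=2$, $c_3=1$, $a_3=0$). Put $z=\tfrac12(H_1+iH_2)$, $w=h_1+ih_2$, $a=a_1+ia_2$. Then along every solution the function $|z^2-a(w-ka)|^2$ is constant.
   Context: This is the Hamiltonian system on the Lie algebra of $E_3$ ($k=0$), $\mathfrak{so}_4$ ($k=1$) or $\mathfrak{so}(1,3)$ ($k=-1$) generated by $H=\frac12\big(\frac{H_1^2}{c_1}+\frac{H_2^2}{c_2}+\frac{H_3^2}{c_3}\big)+a_1h_1+a_2h_2+a_3h_3$ with $c_1=c_2=2c_3$, $a_3=0$, normalized so that $c_3=1$. *)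

theory Defs
  imports "HOL-Analysis.Analysis"
begin

definition Omega :: "real^3 \<Rightarrow> real^3" where
  "Omega H = vector [H$1 / 2, H$2 / 2, H$3]"

end

theory Submission
  imports Defs
begin

lemma comp_deriv:
  fixes f :: "real \<Rightarrow> real^'n"
  assumes "(f has_vector_derivative D) F"
  shows "((\<lambda>t. f t $ i) has_real_derivative (D $ i)) F"
proof -
  have "((\<lambda>t. f t $ i) has_derivative (\<lambda>x. (x *\<^sub>R D) $ i)) F"
    using bounded_linear.has_derivative[OF bounded_linear_vec_nth assms[unfolded has_vector_derivative_def]] .
  moreover have "(\<lambda>x. x * D $ i) = (*) (D $ i)" by (auto simp: mult.commute)
  ultimately show ?thesis by (simp add: has_field_derivative_def)
qed

theorem mainTheorem1:
  fixes k a1 a2 :: real and I :: "real set"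
    and H h :: "real \<Rightarrow> real^3"
  assumes hk: "k \<in> {0, 1, -1}"
    and hI: "is_interval I"
    and dH: "\<And>t. t \<in> I \<Longrightarrow> (H has_vector_derivative
              (cross3 (H t) (Omega (H t)) + cross3 (h t) (vector [a1, a2, 0])))
              (at t within I)"
    and dh: "\<And>t. t \<in> I \<Longrightarrow> (h has_vector_derivative
              (cross3 (h t) (Omega (H t)) + k *\<^sub>R cross3 (H t) (vector [a1, a2, 0])))
              (at t within I)"
  shows "\<exists>C. \<forall>t\<in>I.
    (let z = Complex (H t $ 1 / 2) (H t $ 2 / 2);
         w = Complex (h t $ 1) (h t $ 2);
         a = Complex a1 a2
     in (cmod (z\<^sup>2 - a * (w - complex_of_real k * a)))\<^sup>2) = C"
proof -
  define R where "R t = ((H t $ 1)^2 - (H t $ 2)^2)/4 - (a1 * h t $ 1 - a2 * h t $ 2) + k*(a1^2-a2^2)" for t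
  define J where "J t = (H t $ 1) * (H t $ 2)/2 - (a1 * h t $ 2 + a2 * h t $ 1) + 2*k*a1*a2" for t
  define f where "f t = (R t)^2 + (J t)^2" for t
  have eq: "(let z = Complex (H t $ 1 / 2) (H t $ 2 / 2);
         w = Complex (h t $ 1) (h t $ 2);
         a = Complex a1 a2
     in (cmod (z\<^sup>2 - a * (w - complex_of_real k * a)))\<^sup>2) = f t" for t
  proof -
    have E: "(Complex (H t $ 1 / 2) (H t $ 2 / 2))\<^sup>2 - Complex a1 a2 * (Complex (h t $ 1) (h t $ 2) - complex_of_real k * Complex a1 a2) = Complex (R t) (J t)"
      by (simp add: R_def J_def power2_eq_square complex_eq_iff field_simps)
    show ?thesis by (simp only: Let_def E) (simp add: f_def cmod_def)
  qed
  have der: "(f has_real_derivative 0) (at t within I)" if t: "t \<in> I" for t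
  proof -
    note c1 = comp_deriv[OF dH[OF t], of 1] and c2 = comp_deriv[OF dH[OF t], of 2]
     and c3 = comp_deriv[OF dh[OF t], of 1] and c4 = comp_deriv[OF dh[OF t], of 2]
    have e1: "((\<lambda>s. H s $ 1) has_real_derivative (H t $ 2 * H t $ 3 / 2 - h t $ 3 * a2)) (at t within I)"
      using c1 by (simp add: Omega_def cross3_def)
    have e2: "((\<lambda>s. H s $ 2) has_real_derivative (- H t $ 1 * H t $ 3 / 2 + h t $ 3 * a1)) (at t within I)"
      using c2 by (simp add: Omega_def cross3_def algebra_simps)
    have e3: "((\<lambda>s. h s $ 1) has_real_derivative (h t $ 2 * H t $ 3 - h t $ 3 * H t $ 2 / 2 - k * H t $ 3 * a2)) (at t within I)"
      using c3 by (simp add: Omega_def cross3_def algebra_simps)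
    have e4: "((\<lambda>s. h s $ 2) has_real_derivative (h t $ 3 * H t $ 1 / 2 - h t $ 1 * H t $ 3 + k * H t $ 3 * a1)) (at t within I)"
      using c4 by (simp add: Omega_def cross3_def algebra_simps)
    define x1 where "x1 = (\<lambda>s. H s $ 1)"
    define x2 where "x2 = (\<lambda>s. H s $ 2)"
    define y1 where "y1 = (\<lambda>s. h s $ 1)"
    define y2 where "y2 = (\<lambda>s. h s $ 2)"
    have Rx: "R = (\<lambda>s. ((x1 s)^2 - (x2 s)^2)/4 - (a1 * y1 s - a2 * y2 s) + k*(a1^2-a2^2))"
      by (simp add: R_def x1_def x2_def y1_def y2_def fun_eq_iff)
    have Jx: "J = (\<lambda>s. x1 s * x2 s/2 - (a1 * y2 s + a2 * y1 s) + 2*k*a1*a2)"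
      by (simp add: J_def x1_def x2_def y1_def y2_def fun_eq_iff)
    note e1 = e1[folded x1_def] and e2 = e2[folded x2_def] and e3 = e3[folded y1_def] and e4 = e4[folded y2_def]
    define d1 where "d1 = H t $ 2 * H t $ 3 / 2 - h t $ 3 * a2"
    define d2 where "d2 = - H t $ 1 * H t $ 3 / 2 + h t $ 3 * a1"
    define d3 where "d3 = h t $ 2 * H t $ 3 - h t $ 3 * H t $ 2 / 2 - k * H t $ 3 * a2"
    define d4 where "d4 = h t $ 3 * H t $ 1 / 2 - h t $ 1 * H t $ 3 + k * H t $ 3 * a1"
    have R': "(R has_real_derivative ((2 * H t $ 1 * d1 - 2 * H t $ 2 * d2)/4 - (a1 * d3 - a2 * d4))) (at t within I)"
      unfolding Rx d1_def d2_def d3_def d4_def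
      by (rule DERIV_cong, (auto intro!: derivative_eq_intros e1 e2 e3 e4)[1]) (simp add: x1_def x2_def field_simps)
    have J': "(J has_real_derivative ((d1 * H t $ 2 + H t $ 1 * d2)/2 - (a1 * d4 + a2 * d3))) (at t within I)"
      unfolding Jx d1_def d2_def d3_def d4_def
      by (rule DERIV_cong, (auto intro!: derivative_eq_intros e1 e2 e3 e4)[1]) (simp add: x1_def x2_def field_simps)
    have F: "(f has_real_derivative (2 * R t * ((2 * H t $ 1 * d1 - 2 * H t $ 2 * d2)/4 - (a1 * d3 - a2 * d4))
        + 2 * J t * ((d1 * H t $ 2 + H t $ 1 * d2)/2 - (a1 * d4 + a2 * d3)))) (at t within I)"
      unfolding f_def[abs_def]
      by (rule DERIV_cong, (auto intro!: derivative_eq_intros R' J')[1]) simp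
    have Z: "2 * R t * ((2 * H t $ 1 * d1 - 2 * H t $ 2 * d2)/4 - (a1 * d3 - a2 * d4))
        + 2 * J t * ((d1 * H t $ 2 + H t $ 1 * d2)/2 - (a1 * d4 + a2 * d3)) = 0"
      unfolding R_def J_def d1_def d2_def d3_def d4_def
      by (simp add: field_simps power2_eq_square)
    show ?thesis using F Z by simp
  qed
  have "convex I" using hI by (simp add: is_interval_convex)
  then obtain C where "\<forall>t\<in>I. f t = C" using has_field_derivative_zero_constant[OF _ der] by blast
  then show ?thesis using eq by auto
qed

end
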